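(* The sheaf $\mathcal{C}_{X_{\mathrm{crs}}}$ is not soft: for the closed subset $A=\bigcup_{n\ge1}e_n^0\subset X_{\mathrm{crs}}$ with inclusion $j:A\to X_{\mathrm{crs}}$, the restriction map $H^0(X_{\mathrm{crs}},\mathcal{C}_{X_{\mathrm{crs}}})\to H^0(A,j^{-1}\mathcal{C}_{X_{\mathrm{crs}}})$ is not surjective.
   Context: Let $X$ be the following 2-dimensional CW-complex. Its 0-cells are $e_n^0$, $n\ge 0$; the point $x=e_0^0$ is called the origin. For each $n\ge1$ there are two 1-cells $e_n^1, e_{-n}^1$, each joining $x$ to $e_n^0$, so that $e_0^0\cup e_n^0\cup e_n^1\cup e_{-n}^1$ is homeomorphic to a circle; for each $n\ge1$ a 2-cell $e_n^2$ is attached via a homeomorphism $\varphi_n:S^1\to e_0^0\cup e_n^0\cup e_n^1\cup e_{-n}^1$. Thus each closed 2-cell $\overline{e_n^2}$ is a closed disk having $x$ and $e_n^0$ on its boundary, and $X$ is a wedge at $x$ of countably many closed disks, carrying the CW (weak) topology. The coarser topology on the set $X$ consists of all subsets $U\subset X$ that are open in the CW-topology and either do not contain $x$, or contain $\overline{e_n^2}\smallsetminus e_n^0$ for all but finitely many $n\ge1$. The set $X$ with this coarser topology is denoted $X_{\mathrm{crs}}$. $\mathcal{C}_{X_{\mathrm{crs}}}$ denotes the sheaf of continuous real-valued functions on $X_{\mathrm{crs}}$; $j^{-1}$ is the inverse image sheaf. *)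

theory Defs
  imports "HOL-Analysis.Analysis"
begin

text \<open>Model of X: a wedge of countably many closed disks D_n (n >= 1), each being the closed
 unit disk in the complex plane. In disk n the point -1 is glued to the origin x (= None),
 the point 1 is the 0-cell e_n^0, the two open half circles are the 1-cells e_n^1, e_{-n}^1,
 and the open disk is the 2-cell e_n^2. A point of X is None (the origin) or Some (n, z) with
 n >= 1, cmod z <= 1, z \<noteq> -1.\<close>

type_synonym xpt = "(nat \<times> complex) option"

definition Xpts :: "xpt set" where
  "Xpts = insert None {Some (n, z) | n z. n \<ge> 1 \<and> z \<in> cball 0 1 \<and> z \<noteq> -1}"

definition qmap :: "nat \<Rightarrow> complex \<Rightarrow> xpt" where
  "qmap n z = (if z = -1 then None else Some (n, z))"

definition vert :: "nat \<Rightarrow> xpt" where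
  "vert n = Some (n, 1)"

definition cw_open :: "xpt set \<Rightarrow> bool" where
  "cw_open U \<longleftrightarrow> U \<subseteq> Xpts \<and>
     (\<forall>n\<ge>1. openin (top_of_set (cball (0::complex) 1)) {z \<in> cball 0 1. qmap n z \<in> U})"

definition crs_open :: "xpt set \<Rightarrow> bool" where
  "crs_open U \<longleftrightarrow> cw_open U \<and>
     (None \<notin> U \<or> finite {n. n \<ge> 1 \<and> \<not> (qmap n ` (cball 0 1 - {1}) \<subseteq> U)})"

definition Xcrs :: "xpt topology" where
  "Xcrs = topology crs_open"

definition same_germ :: "'a topology \<Rightarrow> 'a \<Rightarrow> ('a \<Rightarrow> real) \<Rightarrow> ('a \<Rightarrow> real) \<Rightarrow> bool" where
  "same_germ T p f g \<longleftrightarrow> (\<exists>V. openin T V \<and> p \<in> V \<and> (\<forall>y\<in>V. f y = g y))"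

text \<open>Sections over A of the inverse image sheaf j^{-1} C_T (via the etale space):
 a germ (given by a representative) of a continuous function at every point of A,
 locally induced by a continuous function on an open set of T.\<close>
definition inv_image_section :: "'a topology \<Rightarrow> 'a set \<Rightarrow> ('a \<Rightarrow> 'a \<Rightarrow> real) \<Rightarrow> bool" where
  "inv_image_section T A \<sigma> \<longleftrightarrow>
     (\<forall>a\<in>A. \<exists>U g. openin T U \<and> a \<in> U \<and> continuous_map (subtopology T U) euclideanreal g \<and>
        (\<forall>b\<in>U \<inter> A. same_germ T b (\<sigma> b) g))"

definition restriction_of_global :: "'a topology \<Rightarrow> 'a set \<Rightarrow> ('a \<Rightarrow> 'a \<Rightarrow> real) \<Rightarrow> bool" where
  "restriction_of_global T A \<sigma> \<longleftrightarrow>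
     (\<exists>f. continuous_map T euclideanreal f \<and> (\<forall>a\<in>A. same_germ T a f (\<sigma> a)))"

end

theory Submission
  imports Defs
begin

lemma cw_open_Int: "cw_open S \<Longrightarrow> cw_open T \<Longrightarrow> cw_open (S \<inter> T)"
proof -
  assume S: "cw_open S" and T: "cw_open T"
  have e: "{z \<in> cball 0 1. qmap n z \<in> S \<inter> T} =
        {z \<in> cball 0 1. qmap n z \<in> S} \<inter> {z \<in> cball 0 1. qmap n z \<in> T}" for n by auto
  show ?thesis using S T unfolding cw_open_def e by (auto intro: openin_Int)
qed

lemma cw_open_Union: "(\<forall>K\<in>KK. cw_open K) \<Longrightarrow> cw_open (\<Union>KK)"
proof -
  assume A: "\<forall>K\<in>KK. cw_open K"
  have e: "{z \<in> cball 0 1. qmap n z \<in> \<Union>KK} =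
        (\<Union>K\<in>KK. {z \<in> cball 0 1. qmap n z \<in> K})" for n by auto
  show ?thesis using A unfolding cw_open_def e by (auto intro!: openin_Union)
qed

lemma istop: "istopology crs_open"
  unfolding istopology_def
proof (intro conjI allI impI)
  fix S T assume S: "crs_open S" and T: "crs_open T"
  have c: "cw_open (S \<inter> T)" using S T cw_open_Int unfolding crs_open_def by blast
  show "crs_open (S \<inter> T)"
  proof (cases "None \<in> S \<inter> T")
    case True
    let ?B = "\<lambda>U. {n. n \<ge> 1 \<and> \<not> (qmap n ` (cball 0 1 - {1}) \<subseteq> U)}"
    have "?B (S \<inter> T) \<subseteq> ?B S \<union> ?B T" by auto
    moreover have "finite (?B S)" "finite (?B T)" using S T True unfolding crs_open_def by auto
    ultimately have "finite (?B (S \<inter> T))" by (meson finite_UnI finite_subset)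
    then show ?thesis using c unfolding crs_open_def by blast
  next
    case False
    then show ?thesis using c unfolding crs_open_def by blast
  qed
next
  fix KK assume A: "\<forall>K\<in>KK. crs_open K"
  have c: "cw_open (\<Union>KK)" using A cw_open_Union unfolding crs_open_def by blast
  show "crs_open (\<Union>KK)"
  proof (cases "None \<in> \<Union>KK")
    case True
    then obtain K where K: "K \<in> KK" "None \<in> K" by blast
    let ?B = "\<lambda>U. {n. n \<ge> 1 \<and> \<not> (qmap n ` (cball 0 1 - {1}) \<subseteq> U)}"
    have "?B (\<Union>KK) \<subseteq> ?B K" using K by auto
    moreover have "finite (?B K)" using A K unfolding crs_open_def by auto
    ultimately have "finite (?B (\<Union>KK))" by (meson finite_subset)
    then show ?thesis using c unfolding crs_open_def by blast
  next
    case False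
    then show ?thesis using c unfolding crs_open_def by blast
  qed
qed

lemma openin_Xcrs: "openin Xcrs = crs_open"
  unfolding Xcrs_def using istop by simp

lemma qmap_in: "n \<ge> 1 \<Longrightarrow> z \<in> cball 0 1 \<Longrightarrow> qmap n z \<in> Xpts"
  unfolding qmap_def Xpts_def by auto

lemma crs_open_Xpts: "crs_open Xpts"
  unfolding crs_open_def cw_open_def
proof (intro conjI)
  show "\<forall>n\<ge>1. openin (top_of_set (cball (0::complex) 1)) {z \<in> cball 0 1. qmap n z \<in> Xpts}"
  proof (intro allI impI)
    fix n :: nat assume "n \<ge> 1"
    then have "{z \<in> cball 0 1. qmap n z \<in> Xpts} = cball 0 1" using qmap_in by auto
    then show "openin (top_of_set (cball (0::complex) 1)) {z \<in> cball 0 1. qmap n z \<in> Xpts}"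
      by simp
  qed
  have "{n. n \<ge> 1 \<and> \<not> (qmap n ` (cball 0 1 - {1}) \<subseteq> Xpts)} = {}" using qmap_in by auto
  then show "None \<notin> Xpts \<or> finite {n. n \<ge> 1 \<and> \<not> (qmap n ` (cball 0 1 - {1}) \<subseteq> Xpts)}"
    by (metis finite.emptyI)
qed simp

lemma topspace_Xcrs: "topspace Xcrs = Xpts"
proof -
  have "Xpts \<subseteq> topspace Xcrs" using crs_open_Xpts openin_Xcrs
    by (metis openin_subset)
  moreover have "topspace Xcrs \<subseteq> Xpts"
    unfolding topspace_def openin_Xcrs crs_open_def cw_open_def by auto
  ultimately show ?thesis by blast
qed

lemma qmap_cont: "n \<ge> 1 \<Longrightarrow> continuous_map (top_of_set (cball (0::complex) 1)) Xcrs (qmap n)"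
  unfolding continuous_map_def topspace_Xcrs openin_Xcrs
  by (auto simp: qmap_in crs_open_def cw_open_def)

lemma qmap_vert: "qmap m z = vert k \<longleftrightarrow> z \<noteq> -1 \<and> m = k \<and> z = 1"
  unfolding qmap_def vert_def by auto

lemma closed_A: "closedin Xcrs (vert ` {1..})"
proof -
  have sub: "vert ` {1..} \<subseteq> Xpts" unfolding vert_def Xpts_def by auto
  have cw: "cw_open (Xpts - vert ` {1..})"
    unfolding cw_open_def
  proof (intro conjI allI impI)
    fix n :: nat assume n: "n \<ge> 1"
    have "{z \<in> cball 0 1. qmap n z \<in> Xpts - vert ` {1..}} = cball 0 1 \<inter> (- {1})"
      using n qmap_in qmap_vert by fastforce
    moreover have "open (- {1::complex})" by auto
    ultimately show "openin (top_of_set (cball (0::complex) 1)) {z \<in> cball 0 1. qmap n z \<in> Xpts - vert ` {1..}}"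
      by auto
  qed auto
  have "{n. n \<ge> 1 \<and> \<not> (qmap n ` (cball 0 1 - {1}) \<subseteq> Xpts - vert ` {1..})} = {}"
    using qmap_in qmap_vert by fastforce
  then have "crs_open (Xpts - vert ` {1..})" using cw unfolding crs_open_def
    by (metis finite.emptyI)
  then show ?thesis unfolding closedin_def topspace_Xcrs openin_Xcrs using sub by blast
qed

definition Nbh :: "nat \<Rightarrow> xpt set" where
  "Nbh n = {Some (n, z) | z. z \<in> cball 0 1 \<and> Re z > 0}"

lemma Nbh_open: "n \<ge> 1 \<Longrightarrow> crs_open (Nbh n)"
proof -
  assume n: "n \<ge> 1"
  have sub: "Nbh n \<subseteq> Xpts" unfolding Nbh_def Xpts_def using n by force
  have "openin (top_of_set (cball (0::complex) 1)) {z \<in> cball 0 1. qmap m z \<in> Nbh n}" for m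
  proof (cases "m = n")
    case True
    have "{z \<in> cball 0 1. qmap m z \<in> Nbh n} = cball 0 1 \<inter> {z. Re z > 0}"
      using True unfolding Nbh_def qmap_def by auto
    then show ?thesis using open_halfspace_Re_gt by auto
  next
    case False
    have "{z \<in> cball 0 1. qmap m z \<in> Nbh n} = {}"
      using False unfolding Nbh_def qmap_def by auto
    then show ?thesis by (metis openin_empty)
  qed
  moreover have "None \<notin> Nbh n" unfolding Nbh_def by auto
  ultimately show ?thesis using sub unfolding crs_open_def cw_open_def by blast
qed

lemma vert_Nbh: "vert n \<in> Nbh n" unfolding vert_def Nbh_def by auto

lemma Nbh_A: "b \<in> Nbh n \<Longrightarrow> b \<in> vert ` {1..} \<Longrightarrow> b = vert n"
  unfolding vert_def Nbh_def by auto

definition sig :: "xpt \<Rightarrow> xpt \<Rightarrow> real" where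
  "sig b = (\<lambda>y. real (fst (the b)))"

lemma sig_section: "inv_image_section Xcrs (vert ` {1..}) sig"
  unfolding inv_image_section_def
proof
  fix a assume "a \<in> vert ` {1..}"
  then obtain n where n: "n \<ge> 1" "a = vert n" by auto
  show "\<exists>U g. openin Xcrs U \<and> a \<in> U \<and> continuous_map (subtopology Xcrs U) euclideanreal g \<and>
        (\<forall>b\<in>U \<inter> vert ` {1..}. same_germ Xcrs b (sig b) g)"
  proof (intro exI conjI ballI)
    show "openin Xcrs (Nbh n)" using Nbh_open n openin_Xcrs by simp
    show "a \<in> Nbh n" using n vert_Nbh by simp
    show "continuous_map (subtopology Xcrs (Nbh n)) euclideanreal (\<lambda>y. real n)" by simp
    fix b assume b: "b \<in> Nbh n \<inter> vert ` {1..}"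
    then have "b = vert n" using Nbh_A by blast
    then show "same_germ Xcrs b (sig b) (\<lambda>y. real n)"
      unfolding same_germ_def sig_def
      using \<open>openin Xcrs (Nbh n)\<close> b by (auto simp: vert_def)
  qed
qed

lemma not_global: "\<not> restriction_of_global Xcrs (vert ` {1..}) sig"
proof
  assume "restriction_of_global Xcrs (vert ` {1..}) sig"
  then obtain f where f: "continuous_map Xcrs euclideanreal f"
    and g: "\<forall>a\<in>vert ` {1..}. same_germ Xcrs a f (sig a)"
    unfolding restriction_of_global_def by blast
  have fv: "f (vert n) = real n" if "n \<ge> 1" for n
    using g that unfolding same_germ_def sig_def vert_def by force
  define U where "U = {y \<in> topspace Xcrs. f y \<in> ball (f None) 1}"
  have "openin Xcrs U" unfolding U_def
    by (rule openin_continuous_map_preimage[OF f]) simp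
  then have U: "crs_open U" using openin_Xcrs by simp
  have "None \<in> U" unfolding U_def topspace_Xcrs Xpts_def by simp
  then have fin: "finite {n. n \<ge> 1 \<and> \<not> (qmap n ` (cball 0 1 - {1}) \<subseteq> U)}"
    using U unfolding crs_open_def by blast
  obtain n :: nat where nb: "n \<notin> {n. n \<ge> 1 \<and> \<not> (qmap n ` (cball 0 1 - {1}) \<subseteq> U)}"
     and nbig: "n \<ge> nat (ceiling (\<bar>f None\<bar> + 3))"
  proof -
    let ?N = "nat (ceiling (\<bar>f None\<bar> + 3))"
    have "\<not> {?N..} \<subseteq> {n. n \<ge> 1 \<and> \<not> (qmap n ` (cball 0 1 - {1}) \<subseteq> U)}"
      using fin finite_subset infinite_Ici by blast
    then show ?thesis using that by blast
  qed
  have n1: "n \<ge> 1" using nbig by linarith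
  have sub: "qmap n ` (cball 0 1 - {1}) \<subseteq> U" using nb n1 by blast
  have big: "real n \<ge> \<bar>f None\<bar> + 3" using nbig by linarith
  have c: "continuous_map (top_of_set (cball (0::complex) 1)) euclideanreal (f \<circ> qmap n)"
    using continuous_map_compose[OF qmap_cont[OF n1] f] .
  have "openin (top_of_set (cball (0::complex) 1))
        {z \<in> topspace (top_of_set (cball (0::complex) 1)). (f \<circ> qmap n) z \<in> ball (real n) 1}"
    by (rule openin_continuous_map_preimage[OF c]) simp
  then have W: "openin (top_of_set (cball (0::complex) 1))
        {z \<in> cball 0 1. f (qmap n z) \<in> ball (real n) 1}" by simp
  have "(1::complex) \<in> {z \<in> cball 0 1. f (qmap n z) \<in> ball (real n) 1}"
    using fv[OF n1] by (simp add: qmap_def vert_def)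
  then obtain e where e: "e > 0" and
    he: "\<forall>x'\<in>cball 0 1. dist x' 1 < e \<longrightarrow> x' \<in> {z \<in> cball 0 1. f (qmap n z) \<in> ball (real n) 1}"
    using W unfolding openin_euclidean_subtopology_iff by blast
  define t where "t = min e 1 / 2"
  have t: "t > 0" "t < e" "t \<le> 1/2" using e unfolding t_def by auto
  define z where "z = complex_of_real (1 - t)"
  have "cmod (complex_of_real (1 - t)) = \<bar>1 - t\<bar>" by (rule norm_of_real)
  then have zc: "z \<in> cball 0 1" using t unfolding z_def by (simp add: dist_0_norm)
  have "Re z = 1 - t" unfolding z_def by simp
  then have z1: "z \<noteq> 1" using t by auto
  have "z - 1 = complex_of_real (- t)" unfolding z_def by simp
  then have "cmod (z - 1) = \<bar>- t\<bar>" by (simp only: norm_of_real)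
  then have zd: "dist z 1 < e" using t by (simp add: dist_norm)
  have A1: "f (qmap n z) \<in> ball (real n) 1" using he zc zd by blast
  have "qmap n z \<in> U" using sub zc z1 by blast
  then have A2: "f (qmap n z) \<in> ball (f None) 1" unfolding U_def by blast
  from A1 A2 big show False by (auto simp: dist_real_def)
qed

theorem mainTheorem9:
  shows "closedin Xcrs (vert ` {1..}) \<and>
    (\<exists>\<sigma>. inv_image_section Xcrs (vert ` {1..}) \<sigma> \<and>
          \<not> restriction_of_global Xcrs (vert ` {1..}) \<sigma>)"
  using closed_A sig_section not_global by blast

end
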